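(* Let $W\in[0,1]^{k\times k}$ be a symmetric positive semidefinite matrix with unit diagonal, $\mu>0$, and consider linear utilities $u_i({\boldsymbol\theta})=W_i^\top{\boldsymbol\theta}$ with thresholds $\mu_i=\mu$ and strategy space $\mathbb{R}_+^k$. Let ${\boldsymbol\theta}^{\mathrm{eq}}$ be an optimal stable equilibrium, $I=\{i:\theta^{\mathrm{eq}}_i=0\}$, and $\bar W$ the restriction of $W$ (rows and columns) to $[k]\setminus I$. If $\bar{\boldsymbol\theta}$ is an optimal solution of $\min_{\bf x}\{\mathbf{1}^\top{\bf x}:\bar W{\bf x}\ge\mu\mathbf{1},\ {\bf x}\ge\mathbf{0}\}$, then $\bar W\bar{\boldsymbol\theta}=\mu\mathbf{1}$.
   Context: $W_i$ is the $i$-th column of $W$. ${\boldsymbol\theta}$ is feasible if $u_i({\boldsymbol\theta})\ge\mu$ for all $i$. A feasible ${\boldsymbol\theta}\in\mathbb{R}_+^k$ is a stable equilibrium if for no $i$ is there $0\le\theta_i'<\theta_i$ with $u_i(\theta_i',{\boldsymbol\theta}_{-i})\ge\mu$ (${\boldsymbol\theta}$ with $i$-th entry replaced). An optimal stable equilibrium minimizes $\mathbf{1}^\top{\boldsymbol\theta}$ among stable equilibria. *)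

theory Defs
  imports Main "HOL-Analysis.Analysis"
begin

text \<open>Index set [k] is modelled by a finite type 'n (k = CARD('n)); a k x k matrix is
  W :: 'n \<Rightarrow> 'n \<Rightarrow> real, a vector is 'n \<Rightarrow> real.\<close>

definition psd :: "('n::finite \<Rightarrow> 'n \<Rightarrow> real) \<Rightarrow> bool" where
  "psd W \<longleftrightarrow> (\<forall>v. 0 \<le> (\<Sum>i\<in>UNIV. \<Sum>j\<in>UNIV. v i * W i j * v j))"

definition util :: "('n::finite \<Rightarrow> 'n \<Rightarrow> real) \<Rightarrow> 'n \<Rightarrow> ('n \<Rightarrow> real) \<Rightarrow> real" where
  "util W i \<theta> = (\<Sum>j\<in>UNIV. W j i * \<theta> j)"

definition feasible :: "('n::finite \<Rightarrow> 'n \<Rightarrow> real) \<Rightarrow> real \<Rightarrow> ('n \<Rightarrow> real) \<Rightarrow> bool" where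
  "feasible W \<mu> \<theta> \<longleftrightarrow> (\<forall>i. util W i \<theta> \<ge> \<mu>)"

definition stable_eq :: "('n::finite \<Rightarrow> 'n \<Rightarrow> real) \<Rightarrow> real \<Rightarrow> ('n \<Rightarrow> real) \<Rightarrow> bool" where
  "stable_eq W \<mu> \<theta> \<longleftrightarrow> (\<forall>i. 0 \<le> \<theta> i) \<and> feasible W \<mu> \<theta> \<and>
     \<not> (\<exists>i t. 0 \<le> t \<and> t < \<theta> i \<and> util W i (\<theta>(i := t)) \<ge> \<mu>)"

definition optimal_stable_eq :: "('n::finite \<Rightarrow> 'n \<Rightarrow> real) \<Rightarrow> real \<Rightarrow> ('n \<Rightarrow> real) \<Rightarrow> bool" where
  "optimal_stable_eq W \<mu> \<theta> \<longleftrightarrow> stable_eq W \<mu> \<theta> \<and>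
     (\<forall>\<theta>'. stable_eq W \<mu> \<theta>' \<longrightarrow> (\<Sum>i\<in>UNIV. \<theta> i) \<le> (\<Sum>i\<in>UNIV. \<theta>' i))"

text \<open>Restricted LP  min { 1^T x : Wbar x \<ge> mu 1, x \<ge> 0 } over coordinates J = [k] \ I.
  A vector indexed by J is represented as x :: 'n \<Rightarrow> real with x i = 0 outside J.\<close>
definition lp_feasible :: "('n::finite \<Rightarrow> 'n \<Rightarrow> real) \<Rightarrow> real \<Rightarrow> 'n set \<Rightarrow> ('n \<Rightarrow> real) \<Rightarrow> bool" where
  "lp_feasible W \<mu> J x \<longleftrightarrow> (\<forall>i. i \<notin> J \<longrightarrow> x i = 0) \<and> (\<forall>i\<in>J. 0 \<le> x i) \<and>
     (\<forall>i\<in>J. (\<Sum>j\<in>J. W i j * x j) \<ge> \<mu>)"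

definition lp_optimal :: "('n::finite \<Rightarrow> 'n \<Rightarrow> real) \<Rightarrow> real \<Rightarrow> 'n set \<Rightarrow> ('n \<Rightarrow> real) \<Rightarrow> bool" where
  "lp_optimal W \<mu> J x \<longleftrightarrow> lp_feasible W \<mu> J x \<and>
     (\<forall>y. lp_feasible W \<mu> J y \<longrightarrow> (\<Sum>j\<in>J. x j) \<le> (\<Sum>j\<in>J. y j))"

end

theory Submission
  imports Defs
begin

theorem lemma3:
  fixes W :: "'n::finite \<Rightarrow> 'n \<Rightarrow> real" and \<mu> :: real
    and \<theta>eq \<theta>bar :: "'n \<Rightarrow> real"
  assumes W_range: "\<forall>i j. 0 \<le> W i j \<and> W i j \<le> 1"
    and W_sym: "\<forall>i j. W i j = W j i"
    and W_psd: "psd W"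
    and W_diag: "\<forall>i. W i i = 1"
    and mu_pos: "\<mu> > 0"
    and eq_opt: "optimal_stable_eq W \<mu> \<theta>eq"
    and bar_opt: "lp_optimal W \<mu> {i. \<theta>eq i \<noteq> 0} \<theta>bar"
  shows "\<forall>i\<in>{i. \<theta>eq i \<noteq> 0}. (\<Sum>j\<in>{i. \<theta>eq i \<noteq> 0}. W i j * \<theta>bar j) = \<mu>"
proof -
  define J where "J = {i. \<theta>eq i \<noteq> 0}"
  have st: "stable_eq W \<mu> \<theta>eq" using eq_opt unfolding optimal_stable_eq_def by blast
  have nn: "\<And>i. 0 \<le> \<theta>eq i" using st unfolding stable_eq_def by blast
  have fe: "\<And>i. util W i \<theta>eq \<ge> \<mu>" using st unfolding stable_eq_def feasible_def by blast
  have nodec: "\<And>i t. 0 \<le> t \<Longrightarrow> t < \<theta>eq i \<Longrightarrow> \<not> util W i (\<theta>eq(i := t)) \<ge> \<mu>"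
    using st unfolding stable_eq_def by blast
  have utilJ: "util W i \<theta>eq = (\<Sum>j\<in>J. W i j * \<theta>eq j)" for i
  proof -
    have "util W i \<theta>eq = (\<Sum>j\<in>UNIV. W i j * \<theta>eq j)"
      unfolding util_def using W_sym by (metis)
    also have "\<dots> = (\<Sum>j\<in>J. W i j * \<theta>eq j)"
      by (rule sum.mono_neutral_right) (auto simp: J_def)
    finally show ?thesis .
  qed
  have upd: "util W i (\<theta>eq(i := t)) = util W i \<theta>eq - \<theta>eq i + t" for i t
  proof -
    have "util W i (\<theta>eq(i := t)) = (\<Sum>j\<in>UNIV. W j i * \<theta>eq j) + W i i * (t - \<theta>eq i)"
    proof -
      have "(\<Sum>j\<in>UNIV. W j i * (\<theta>eq(i := t)) j) = (\<Sum>j\<in>UNIV. W j i * \<theta>eq j + (if j = i then W i i * (t - \<theta>eq i) else 0))"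
        by (rule sum.cong) (auto simp: algebra_simps)
      also have "\<dots> = (\<Sum>j\<in>UNIV. W j i * \<theta>eq j) + W i i * (t - \<theta>eq i)"
        by (simp add: sum.distrib)
      finally show ?thesis unfolding util_def .
    qed
    then show ?thesis using W_diag unfolding util_def by simp
  qed
  have tight: "(\<Sum>j\<in>J. W i j * \<theta>eq j) = \<mu>" if iJ: "i \<in> J" for i
  proof (rule ccontr)
    assume ne: "(\<Sum>j\<in>J. W i j * \<theta>eq j) \<noteq> \<mu>"
    have gt: "util W i \<theta>eq > \<mu>" using fe[of i] ne utilJ[of i] by linarith
    have pos: "\<theta>eq i > 0" using nn[of i] iJ unfolding J_def by auto
    define t where "t = max 0 (\<theta>eq i - (util W i \<theta>eq - \<mu>))"
    have "0 \<le> t" "t < \<theta>eq i" using gt pos unfolding t_def by auto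
    moreover have "util W i (\<theta>eq(i := t)) \<ge> \<mu>" using upd[of i t] unfolding t_def by linarith
    ultimately show False using nodec by blast
  qed
  have eqfeas: "lp_feasible W \<mu> J \<theta>eq"
    unfolding lp_feasible_def using tight nn by (auto simp: J_def)
  have barfeas: "lp_feasible W \<mu> J \<theta>bar" and barle: "(\<Sum>j\<in>J. \<theta>bar j) \<le> (\<Sum>j\<in>J. \<theta>eq j)"
    using bar_opt eqfeas unfolding lp_optimal_def J_def by blast+
  have fin: "finite J" by simp
  define s where "s i = (\<Sum>j\<in>J. W i j * \<theta>bar j) - \<mu>" for i
  have s_nn: "i \<in> J \<Longrightarrow> 0 \<le> s i" for i using barfeas unfolding lp_feasible_def s_def by auto
  have "(\<Sum>i\<in>J. \<theta>eq i * s i) = (\<Sum>i\<in>J. \<Sum>j\<in>J. \<theta>eq i * W i j * \<theta>bar j) - \<mu> * (\<Sum>i\<in>J. \<theta>eq i)"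
    unfolding s_def by (simp add: algebra_simps sum_distrib_left sum_subtractf sum_distrib_right)
  also have "(\<Sum>i\<in>J. \<Sum>j\<in>J. \<theta>eq i * W i j * \<theta>bar j) = (\<Sum>j\<in>J. \<theta>bar j * (\<Sum>i\<in>J. W j i * \<theta>eq i))"
    by (subst sum.swap) (simp add: sum_distrib_left algebra_simps W_sym)
  also have "\<dots> = (\<Sum>j\<in>J. \<theta>bar j * \<mu>)" using tight by simp
  finally have "(\<Sum>i\<in>J. \<theta>eq i * s i) = \<mu> * ((\<Sum>j\<in>J. \<theta>bar j) - (\<Sum>i\<in>J. \<theta>eq i))"
    by (simp add: sum_distrib_left algebra_simps)
  also have "\<dots> \<le> 0" using barle mu_pos by (simp add: mult_nonneg_nonpos)
  finally have le0: "(\<Sum>i\<in>J. \<theta>eq i * s i) \<le> 0" .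
  have nnt: "\<forall>i\<in>J. 0 \<le> \<theta>eq i * s i" using nn s_nn by simp
  have sum0: "(\<Sum>i\<in>J. \<theta>eq i * s i) = 0"
  proof -
    have "0 \<le> (\<Sum>i\<in>J. \<theta>eq i * s i)" using nnt by (intro sum_nonneg) auto
    then show ?thesis using le0 by linarith
  qed
  have terms: "\<forall>i\<in>J. \<theta>eq i * s i = 0"
    using sum_nonneg_eq_0_iff[OF fin, of "\<lambda>i. \<theta>eq i * s i"] nnt sum0 by simp
  show ?thesis
  proof
    fix i assume "i \<in> {i. \<theta>eq i \<noteq> 0}"
    then have "i \<in> J" "\<theta>eq i \<noteq> 0" unfolding J_def by auto
    then have "s i = 0" using terms by auto
    then show "(\<Sum>j\<in>{i. \<theta>eq i \<noteq> 0}. W i j * \<theta>bar j) = \<mu>" unfolding s_def J_def by simp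
  qed
qed

end
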